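(* Let $N_1,N_3,J,L\in\mathbb{N}$ and let $\hat{\mathcal{X}}\in\mathbb{R}^{N_1\times J\times N_3\times L}$ be a real fourth-order tensor with slices $\hat{\mathcal{X}}_{jl}\in\mathbb{R}^{N_1\times N_3}$ given by $(\hat{\mathcal{X}}_{jl})_{ik}=\hat{\mathcal{X}}_{ijkl}$. Consider all factorizations $\hat{\mathcal{X}}_{jl}=\mathbf{U}(\mathbf{R}_j\mathbf{T}_l)\mathbf{V}^\top$ for all $j=1,\dots,J$, $l=1,\dots,L$, where $D\in\mathbb{N}$ is arbitrary, $\mathbf{U}\in\mathbb{R}^{N_1\times D}$, $\mathbf{V}\in\mathbb{R}^{N_3\times D}$, and $\mathbf{R}_j,\mathbf{T}_l\in\mathbb{R}^{D\times D}$ are real diagonal matrices. Then $$\|\hat{\mathcal{X}}\|_*=\min_{\substack{D,\ \mathbf{U},\mathbf{V},(\mathbf{R}_j),(\mathbf{T}_l):\\ \hat{\mathcal{X}}_{jl}=\mathbf{U}(\mathbf{R}_j\mathbf{T}_l)\mathbf{V}^\top\ \forall j,l}}\ \frac{1}{4\sqrt{JL}}\sum_{l=1}^{L}\sum_{j=1}^{J}\Big(\|\mathbf{U}\mathbf{R}_j\mathbf{T}_l\|_F^2+\|\mathbf{V}\|_F^2+\|\mathbf{V}(\mathbf{R}_j\mathbf{T}_l)^\top\|_F^2+\|\mathbf{U}\|_F^2\Big).$$ Moreover, every factorization attaining this minimum satisfies, for every $d\in\{1,\dots,D\}$, $$\|\mathbf{u}_{:d}\|_2\|\mathbf{r}_{:d}\|_2\|\mathbf{t}_{:d}\|_2=\sqrt{JL}\,\|\mathbf{v}_{:d}\|_2\quad\text{and}\quad\|\mathbf{v}_{:d}\|_2\|\mathbf{r}_{:d}\|_2\|\mathbf{t}_{:d}\|_2=\sqrt{JL}\,\|\mathbf{u}_{:d}\|_2,$$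 where $\mathbf{u}_{:d},\mathbf{v}_{:d}$ are the $d$-th columns of $\mathbf{U},\mathbf{V}$, $\mathbf{r}_{:d}\in\mathbb{R}^J$ is the $d$-th column of $\widetilde{\mathbf{R}}\in\mathbb{R}^{J\times D}$ with $\widetilde{\mathbf{R}}(j,d)=\mathbf{R}_j(d,d)$, and $\mathbf{t}_{:d}\in\mathbb{R}^L$ is the $d$-th column of $\widetilde{\mathbf{T}}\in\mathbb{R}^{L\times D}$ with $\widetilde{\mathbf{T}}(l,d)=\mathbf{T}_l(d,d)$.
   Context: $\|\cdot\|_F$ is the Frobenius norm and $\|\cdot\|_2$ the Euclidean norm. The tensor nuclear 2-norm of a real tensor $\mathcal{A}\in\mathbb{R}^{n_1}\otimes\mathbb{R}^{n_2}\otimes\mathbb{R}^{n_3}\otimes\mathbb{R}^{n_4}$ is $\|\mathcal{A}\|_*=\min\big\{\sum_{i=1}^r\prod_{k=1}^4\|\mathbf{a}_{k,i}\|_2:\ \mathcal{A}=\sum_{i=1}^r\mathbf{a}_{1,i}\otimes\mathbf{a}_{2,i}\otimes\mathbf{a}_{3,i}\otimes\mathbf{a}_{4,i},\ r\in\mathbb{N},\ \mathbf{a}_{k,i}\in\mathbb{R}^{n_k}\big\}$, where $\otimes$ is the outer product. The factorization condition is equivalent to $\hat{\mathcal{X}}=\sum_{d=1}^D\mathbf{u}_{:d}\otimes\mathbf{r}_{:d}\otimes\mathbf{v}_{:d}\otimes\mathbf{t}_{:d}$. *)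

theory Defs
  imports Complex_Main
begin

text \<open>Vectors in R^n are functions nat => real, read on indices < n.
  Matrices in R^(m x n) are functions nat => nat => real, read on indices < m, < n.\<close>

definition vnorm2 :: "nat \<Rightarrow> (nat \<Rightarrow> real) \<Rightarrow> real" where
  "vnorm2 n a = sqrt (\<Sum>k<n. (a k)\<^sup>2)"

definition frob_sq :: "nat \<Rightarrow> nat \<Rightarrow> (nat \<Rightarrow> nat \<Rightarrow> real) \<Rightarrow> real" where
  "frob_sq m n A = (\<Sum>i<m. \<Sum>k<n. (A i k)\<^sup>2)"

definition matmul :: "nat \<Rightarrow> (nat \<Rightarrow> nat \<Rightarrow> real) \<Rightarrow> (nat \<Rightarrow> nat \<Rightarrow> real) \<Rightarrow> (nat \<Rightarrow> nat \<Rightarrow> real)" where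
  "matmul n A B = (\<lambda>i k. \<Sum>s<n. A i s * B s k)"

definition transp :: "(nat \<Rightarrow> nat \<Rightarrow> real) \<Rightarrow> (nat \<Rightarrow> nat \<Rightarrow> real)" where
  "transp A = (\<lambda>i k. A k i)"

definition diagm :: "(nat \<Rightarrow> real) \<Rightarrow> (nat \<Rightarrow> nat \<Rightarrow> real)" where
  "diagm r = (\<lambda>a b. if a = b then r a else 0)"

definition slice :: "(nat \<Rightarrow> nat \<Rightarrow> nat \<Rightarrow> nat \<Rightarrow> real) \<Rightarrow> nat \<Rightarrow> nat \<Rightarrow> (nat \<Rightarrow> nat \<Rightarrow> real)" where
  "slice X j l = (\<lambda>i k. X i j k l)"

definition is_rank1_decomp ::
  "nat \<Rightarrow> nat \<Rightarrow> nat \<Rightarrow> nat \<Rightarrow> (nat \<Rightarrow> nat \<Rightarrow> nat \<Rightarrow> nat \<Rightarrow> real) \<Rightarrow> nat \<Rightarrow>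
   (nat \<Rightarrow> nat \<Rightarrow> real) \<Rightarrow> (nat \<Rightarrow> nat \<Rightarrow> real) \<Rightarrow> (nat \<Rightarrow> nat \<Rightarrow> real) \<Rightarrow> (nat \<Rightarrow> nat \<Rightarrow> real) \<Rightarrow> bool" where
  "is_rank1_decomp n1 n2 n3 n4 X r a1 a2 a3 a4 \<longleftrightarrow>
     (\<forall>i1<n1. \<forall>i2<n2. \<forall>i3<n3. \<forall>i4<n4.
        X i1 i2 i3 i4 = (\<Sum>m<r. a1 m i1 * a2 m i2 * a3 m i3 * a4 m i4))"

text \<open>Tensor nuclear 2-norm (the minimum in the paper's definition; stated here as infimum).\<close>
definition nuclear_norm ::
  "nat \<Rightarrow> nat \<Rightarrow> nat \<Rightarrow> nat \<Rightarrow> (nat \<Rightarrow> nat \<Rightarrow> nat \<Rightarrow> nat \<Rightarrow> real) \<Rightarrow> real" where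
  "nuclear_norm n1 n2 n3 n4 X = Inf
     {(\<Sum>m<r. vnorm2 n1 (a1 m) * vnorm2 n2 (a2 m) * vnorm2 n3 (a3 m) * vnorm2 n4 (a4 m)) |
        r a1 a2 a3 a4. is_rank1_decomp n1 n2 n3 n4 X r a1 a2 a3 a4}"

text \<open>Factorization X_{jl} = U (R_j T_l) V^T for all j<J, l<L, where R_j = diagm (R j),
  T_l = diagm (T l); so R j d = R_j(d,d) and T l d = T_l(d,d).\<close>
definition is_factorization ::
  "nat \<Rightarrow> nat \<Rightarrow> nat \<Rightarrow> nat \<Rightarrow> (nat \<Rightarrow> nat \<Rightarrow> nat \<Rightarrow> nat \<Rightarrow> real) \<Rightarrow> nat \<Rightarrow>
   (nat \<Rightarrow> nat \<Rightarrow> real) \<Rightarrow> (nat \<Rightarrow> nat \<Rightarrow> real) \<Rightarrow> (nat \<Rightarrow> nat \<Rightarrow> real) \<Rightarrow> (nat \<Rightarrow> nat \<Rightarrow> real) \<Rightarrow> bool" where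
  "is_factorization N1 J N3 L X D U V R T \<longleftrightarrow>
     (\<forall>j<J. \<forall>l<L. \<forall>i<N1. \<forall>k<N3.
        slice X j l i k =
          matmul D (matmul D U (matmul D (diagm (R j)) (diagm (T l)))) (transp V) i k)"

definition fact_objective ::
  "nat \<Rightarrow> nat \<Rightarrow> nat \<Rightarrow> nat \<Rightarrow> nat \<Rightarrow>
   (nat \<Rightarrow> nat \<Rightarrow> real) \<Rightarrow> (nat \<Rightarrow> nat \<Rightarrow> real) \<Rightarrow> (nat \<Rightarrow> nat \<Rightarrow> real) \<Rightarrow> (nat \<Rightarrow> nat \<Rightarrow> real) \<Rightarrow> real" where
  "fact_objective N1 J N3 L D U V R T =
     1 / (4 * sqrt (real J * real L)) *
     (\<Sum>l<L. \<Sum>j<J.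
        frob_sq N1 D (matmul D U (matmul D (diagm (R j)) (diagm (T l))))
      + frob_sq N3 D V
      + frob_sq N3 D (matmul D V (transp (matmul D (diagm (R j)) (diagm (T l)))))
      + frob_sq N1 D U)"

end

theory Submission
  imports Defs "HOL-Analysis.Analysis"
begin




lemma vnorm2_nonneg: "vnorm2 n a \<ge> 0"
  by (simp add: vnorm2_def sum_nonneg)

lemma vnorm2_sq: "(vnorm2 n a)^2 = (\<Sum>k<n. (a k)^2)"
  by (simp add: vnorm2_def sum_nonneg)

lemma vnorm2_zero: "vnorm2 n a = 0 \<Longrightarrow> k < n \<Longrightarrow> a k = 0"
  unfolding vnorm2_def
  by (simp add: sum_nonneg_eq_0_iff)

lemma vnorm2_scale: "vnorm2 n (\<lambda>i. c * a i) = \<bar>c\<bar> * vnorm2 n a"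
proof -
  have "(\<Sum>k<n. (c * a k)^2) = c^2 * (\<Sum>k<n. (a k)^2)"
    by (simp add: power_mult_distrib sum_distrib_left)
  then show ?thesis unfolding vnorm2_def by (simp add: real_sqrt_mult)
qed

lemma vnorm2_cong: "(\<And>k. k < n \<Longrightarrow> a k = b k) \<Longrightarrow> vnorm2 n a = vnorm2 n b"
  unfolding vnorm2_def by simp

lemma abs_le_vnorm2: "k < n \<Longrightarrow> \<bar>a k\<bar> \<le> vnorm2 n a"
proof -
  assume k: "k < n"
  have "(a k)^2 \<le> (\<Sum>k<n. (a k)^2)"
    using k by (intro member_le_sum) auto
  then show ?thesis unfolding vnorm2_def
    by (metis real_sqrt_abs real_sqrt_le_iff)
qed

lemma vnorm2_zero_fun: "vnorm2 n (\<lambda>_. 0) = 0"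
  by (simp add: vnorm2_def)

lemma diag_mult: "matmul D (diagm r) (diagm t) a b = (if a = b \<and> a < D then r a * t a else 0)"
proof -
  have "matmul D (diagm r) (diagm t) a b = (\<Sum>s<D. if s = a then (if a = b then r a * t a else 0) else 0)"
    unfolding matmul_def diagm_def by (rule sum.cong) auto
  also have "\<dots> = (if a = b \<and> a < D then r a * t a else 0)" by simp
  finally show ?thesis .
qed

lemma UD: "k < D \<Longrightarrow> matmul D U (matmul D (diagm r) (diagm t)) i k = U i k * r k * t k"
proof -
  assume k: "k < D"
  have "matmul D U (matmul D (diagm r) (diagm t)) i k = (\<Sum>s<D. if s = k then U i k * r k * t k else 0)"
    unfolding matmul_def[of D U] diag_mult using k by (intro sum.cong) auto
  then show ?thesis using k by simp
qed

lemma VD: "k < D \<Longrightarrow> matmul D V (transp (matmul D (diagm r) (diagm t))) i k = V i k * r k * t k"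
proof -
  assume k: "k < D"
  have "matmul D V (transp (matmul D (diagm r) (diagm t))) i k = (\<Sum>s<D. if s = k then V i k * r k * t k else 0)"
    unfolding matmul_def[of D V] transp_def diag_mult using k by (intro sum.cong) auto
  then show ?thesis using k by simp
qed

lemma slice_eq: "matmul D (matmul D U (matmul D (diagm r) (diagm t))) (transp V) i k
   = (\<Sum>s<D. U i s * r s * V k s * t s)"
  unfolding matmul_def[of D "matmul D U _"] transp_def
  by (intro sum.cong) (auto simp: UD)




lemma frob_UD: "frob_sq N1 D (matmul D U (matmul D (diagm r) (diagm t))) = (\<Sum>d<D. (\<Sum>i<N1. (U i d)^2) * (r d)^2 * (t d)^2)"
  unfolding frob_sq_def
  by (subst sum.swap) (auto simp: UD power_mult_distrib sum_distrib_right intro!: sum.cong)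

lemma frob_VD: "frob_sq N3 D (matmul D V (transp (matmul D (diagm r) (diagm t)))) = (\<Sum>d<D. (\<Sum>i<N3. (V i d)^2) * (r d)^2 * (t d)^2)"
  unfolding frob_sq_def
  by (subst sum.swap) (auto simp: VD power_mult_distrib sum_distrib_right intro!: sum.cong)

lemma frob_col: "frob_sq N D U = (\<Sum>d<D. (\<Sum>i<N. (U i d)^2))"
  unfolding frob_sq_def by (rule sum.swap)

lemma sum_lj: fixes A :: "nat \<Rightarrow> real" and R T :: "nat \<Rightarrow> nat \<Rightarrow> real" shows "(\<Sum>l<L. \<Sum>j<J. (\<Sum>d<D. A d * (R j d)^2 * (T l d)^2)) = (\<Sum>d<D. A d * ((\<Sum>j<J. (R j d)^2) * (\<Sum>l<L. (T l d)^2)))"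
proof -
  have "(\<Sum>l<L. \<Sum>j<J. (\<Sum>d<D. A d * (R j d)^2 * (T l d)^2)) = (\<Sum>l<L. \<Sum>d<D. \<Sum>j<J. A d * (R j d)^2 * (T l d)^2)"
    by (rule sum.cong[OF refl], rule sum.swap)
  also have "\<dots> = (\<Sum>d<D. \<Sum>l<L. \<Sum>j<J. A d * (R j d)^2 * (T l d)^2)"
    by (rule sum.swap)
  also have "\<dots> = (\<Sum>d<D. A d * ((\<Sum>j<J. (R j d)^2) * (\<Sum>l<L. (T l d)^2)))"
  proof (intro sum.cong refl)
    fix d
    have "A d * ((\<Sum>j<J. (R j d)^2) * (\<Sum>l<L. (T l d)^2)) = A d * ((\<Sum>l<L. (T l d)^2) * (\<Sum>j<J. (R j d)^2))"
      by (simp only: mult.commute[of "\<Sum>j<J. (R j d)^2"])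
    also have "\<dots> = (\<Sum>l<L. \<Sum>j<J. A d * ((T l d)^2 * (R j d)^2))"
      by (subst sum_product) (simp only: sum_distrib_left)
    finally show "(\<Sum>l<L. \<Sum>j<J. A d * (R j d)^2 * (T l d)^2) = A d * ((\<Sum>j<J. (R j d)^2) * (\<Sum>l<L. (T l d)^2))"
      by (simp add: mult_ac)
  qed
  finally show ?thesis .
qed

lemma obj_formula:
  assumes "J \<ge> 1" "L \<ge> 1"
  shows "fact_objective N1 J N3 L D U V R T =
   (\<Sum>d<D. ((\<Sum>i<N1. (U i d)^2) * ((\<Sum>j<J. (R j d)^2) * (\<Sum>l<L. (T l d)^2))
           + real J * real L * (\<Sum>k<N3. (V k d)^2)
           + (\<Sum>k<N3. (V k d)^2) * ((\<Sum>j<J. (R j d)^2) * (\<Sum>l<L. (T l d)^2))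
           + real J * real L * (\<Sum>i<N1. (U i d)^2)) / (4 * sqrt (real J * real L)))"
proof -
  have e: "(\<Sum>l<L. \<Sum>j<J.
        frob_sq N1 D (matmul D U (matmul D (diagm (R j)) (diagm (T l))))
      + frob_sq N3 D V
      + frob_sq N3 D (matmul D V (transp (matmul D (diagm (R j)) (diagm (T l)))))
      + frob_sq N1 D U)
   = (\<Sum>d<D. ((\<Sum>i<N1. (U i d)^2) * ((\<Sum>j<J. (R j d)^2) * (\<Sum>l<L. (T l d)^2))
           + real J * real L * (\<Sum>k<N3. (V k d)^2)
           + (\<Sum>k<N3. (V k d)^2) * ((\<Sum>j<J. (R j d)^2) * (\<Sum>l<L. (T l d)^2))
           + real J * real L * (\<Sum>i<N1. (U i d)^2)))"
    apply (simp only: sum.distrib frob_UD frob_VD sum_lj[where A="\<lambda>d. \<Sum>i<N1. (U i d)^2"]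
         sum_lj[where A="\<lambda>d. \<Sum>i<N3. (V i d)^2"] frob_col[of N3 D V] frob_col[of N1 D U])
    apply (simp add: sum_distrib_left mult_ac)
    done
  show ?thesis unfolding fact_objective_def e
    by (simp add: sum_divide_distrib)
qed




definition cost :: "nat \<Rightarrow> nat \<Rightarrow> nat \<Rightarrow> nat \<Rightarrow> nat \<Rightarrow> (nat \<Rightarrow> nat \<Rightarrow> real) \<Rightarrow> (nat \<Rightarrow> nat \<Rightarrow> real) \<Rightarrow> (nat \<Rightarrow> nat \<Rightarrow> real) \<Rightarrow> (nat \<Rightarrow> nat \<Rightarrow> real) \<Rightarrow> real" where
  "cost n1 n2 n3 n4 r a1 a2 a3 a4 = (\<Sum>m<r. vnorm2 n1 (a1 m) * vnorm2 n2 (a2 m) * vnorm2 n3 (a3 m) * vnorm2 n4 (a4 m))"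

lemma cost_nonneg: "cost n1 n2 n3 n4 r a1 a2 a3 a4 \<ge> 0"
  unfolding cost_def by (intro sum_nonneg mult_nonneg_nonneg vnorm2_nonneg)

lemma nn_le:
  assumes "is_rank1_decomp n1 n2 n3 n4 X r a1 a2 a3 a4"
  shows "nuclear_norm n1 n2 n3 n4 X \<le> cost n1 n2 n3 n4 r a1 a2 a3 a4"
  unfolding nuclear_norm_def cost_def
proof (rule cInf_lower)
  show "(\<Sum>m<r. vnorm2 n1 (a1 m) * vnorm2 n2 (a2 m) * vnorm2 n3 (a3 m) * vnorm2 n4 (a4 m)) \<in> {(\<Sum>m<r. vnorm2 n1 (a1 m) * vnorm2 n2 (a2 m) * vnorm2 n3 (a3 m) * vnorm2 n4 (a4 m)) |
        r a1 a2 a3 a4. is_rank1_decomp n1 n2 n3 n4 X r a1 a2 a3 a4}"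
    using assms by blast
  show "bdd_below {(\<Sum>m<r. vnorm2 n1 (a1 m) * vnorm2 n2 (a2 m) * vnorm2 n3 (a3 m) * vnorm2 n4 (a4 m)) |
        r a1 a2 a3 a4. is_rank1_decomp n1 n2 n3 n4 X r a1 a2 a3 a4}"
    by (rule bdd_belowI[of _ 0]) (auto intro!: sum_nonneg mult_nonneg_nonneg vnorm2_nonneg)
qed

lemma fact_decomp:
  assumes "is_factorization N1 J N3 L X D U V R T"
  shows "is_rank1_decomp N1 J N3 L X D (\<lambda>d i. U i d) (\<lambda>d j. R j d) (\<lambda>d k. V k d) (\<lambda>d l. T l d)"
  using assms unfolding is_factorization_def is_rank1_decomp_def slice_eq slice_def by auto

lemma obj_formula2:
  assumes "J \<ge> 1" "L \<ge> 1"
  shows "fact_objective N1 J N3 L D U V R T =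
   (\<Sum>d<D. ((vnorm2 N1 (\<lambda>i. U i d))^2 * (vnorm2 J (\<lambda>j. R j d) * vnorm2 L (\<lambda>l. T l d))^2
           + (sqrt (real J * real L))^2 * (vnorm2 N3 (\<lambda>k. V k d))^2
           + (vnorm2 N3 (\<lambda>k. V k d))^2 * (vnorm2 J (\<lambda>j. R j d) * vnorm2 L (\<lambda>l. T l d))^2
           + (sqrt (real J * real L))^2 * (vnorm2 N1 (\<lambda>i. U i d))^2) / (4 * sqrt (real J * real L)))"
  unfolding obj_formula[OF assms] power_mult_distrib vnorm2_sq by simp

lemma amgm:
  fixes s a b c :: real
  assumes "s > 0"
  shows "(a^2 * c^2 + s^2 * b^2 + b^2 * c^2 + s^2 * a^2) / (4 * s) = a * b * c + ((a * c - s * b)^2 + (b * c - s * a)^2) / (4 * s)"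
  using assms by (simp add: field_simps power2_eq_square)




lemma vnorm2_col_scale:
  assumes "\<alpha> = vnorm2 n (a :: nat \<Rightarrow> real)" "\<alpha> > 0" "q \<ge> 0"
  shows "vnorm2 n (\<lambda>i. a i * (q / \<alpha>)) = q"
proof -
  have "vnorm2 n (\<lambda>i. a i * (q / \<alpha>)) = vnorm2 n (\<lambda>i. (q / \<alpha>) * a i)"
    by (simp add: mult.commute)
  also have "\<dots> = \<bar>q / \<alpha>\<bar> * \<alpha>" by (simp only: vnorm2_scale assms(1)[symmetric])
  also have "\<dots> = q" using assms by simp
  finally show ?thesis .
qed

lemma vn_if:
  assumes "\<not> P \<Longrightarrow> vnorm2 n a > 0" "c \<ge> 0"
  shows "vnorm2 n (\<lambda>i. if P then 0 else a i * (c / vnorm2 n a)) = (if P then 0 else c)"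
proof (cases P)
  case True then show ?thesis by (simp add: vnorm2_zero_fun)
next
  case False
  then have "vnorm2 n (\<lambda>i. if P then 0 else a i * (c / vnorm2 n a)) = vnorm2 n (\<lambda>i. a i * (c / vnorm2 n a))"
    by (simp only: if_False)
  also have "\<dots> = c" using assms False by (intro vnorm2_col_scale) auto
  finally show ?thesis using False by simp
qed

lemma construct:
  assumes dec: "is_rank1_decomp N1 J N3 L X r a1 a2 a3 a4" and J: "J \<ge> 1" and L: "L \<ge> 1"
  shows "\<exists>U V R T. is_factorization N1 J N3 L X r U V R T \<and>
            fact_objective N1 J N3 L r U V R T = cost N1 J N3 L r a1 a2 a3 a4"
proof -
  define s where "s = sqrt (real J * real L)"
  have s: "s > 0" using J L by (simp add: s_def)
  define p where "p d = vnorm2 N1 (a1 d) * vnorm2 J (a2 d) * vnorm2 N3 (a3 d) * vnorm2 L (a4 d)" for d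
  define q where "q d = sqrt (p d / s)" for d
  define \<rho> where "\<rho> = sqrt s"
  define U where "U = (\<lambda>i d. if p d = 0 then 0 else a1 d i * (q d / vnorm2 N1 (a1 d)))"
  define R where "R = (\<lambda>j d. if p d = 0 then 0 else a2 d j * (\<rho> / vnorm2 J (a2 d)))"
  define V where "V = (\<lambda>k d. if p d = 0 then 0 else a3 d k * (q d / vnorm2 N3 (a3 d)))"
  define T where "T = (\<lambda>l d. if p d = 0 then 0 else a4 d l * (\<rho> / vnorm2 L (a4 d)))"
  have pnn: "p d \<ge> 0" for d unfolding p_def by (intro mult_nonneg_nonneg vnorm2_nonneg)
  have pos: "vnorm2 N1 (a1 d) > 0 \<and> vnorm2 J (a2 d) > 0 \<and> vnorm2 N3 (a3 d) > 0 \<and> vnorm2 L (a4 d) > 0"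
    if "p d \<noteq> 0" for d
    using that vnorm2_nonneg[of N1 "a1 d"] vnorm2_nonneg[of J "a2 d"] vnorm2_nonneg[of N3 "a3 d"] vnorm2_nonneg[of L "a4 d"]
    unfolding p_def by (metis less_eq_real_def mult_zero_left mult_zero_right)
  have q2: "(q d)^2 = p d / s" for d unfolding q_def using pnn[of d] s by simp
  have rho2: "\<rho>^2 = s" unfolding \<rho>_def using s by simp
  have qnn: "q d \<ge> 0" for d unfolding q_def using pnn[of d] s by simp
  have rnn: "\<rho> \<ge> 0" unfolding \<rho>_def using s by simp
  have entry: "U i d * R j d * V k d * T l d = a1 d i * a2 d j * a3 d k * a4 d l"
    if "i < N1" "j < J" "k < N3" "l < L" for i j k l d
  proof (cases "p d = 0")
    case True
    then have "vnorm2 N1 (a1 d) = 0 \<or> vnorm2 J (a2 d) = 0 \<or> vnorm2 N3 (a3 d) = 0 \<or> vnorm2 L (a4 d) = 0"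
      unfolding p_def by auto
    then have "a1 d i = 0 \<or> a2 d j = 0 \<or> a3 d k = 0 \<or> a4 d l = 0"
      using that vnorm2_zero by blast
    then show ?thesis using True unfolding U_def R_def V_def T_def by auto
  next
    case False
    note P = pos[OF False]
    have "(q d / vnorm2 N1 (a1 d)) * (\<rho> / vnorm2 J (a2 d)) * (q d / vnorm2 N3 (a3 d)) * (\<rho> / vnorm2 L (a4 d))
       = (q d)^2 * \<rho>^2 / p d"
      unfolding p_def by (simp add: power2_eq_square)
    also have "\<dots> = 1" using False s by (simp add: q2 rho2)
    finally have one: "(q d / vnorm2 N1 (a1 d)) * (\<rho> / vnorm2 J (a2 d)) * (q d / vnorm2 N3 (a3 d)) * (\<rho> / vnorm2 L (a4 d)) = 1" .
    have "U i d * R j d * V k d * T l d = (a1 d i * a2 d j * a3 d k * a4 d l) *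
       ((q d / vnorm2 N1 (a1 d)) * (\<rho> / vnorm2 J (a2 d)) * (q d / vnorm2 N3 (a3 d)) * (\<rho> / vnorm2 L (a4 d)))"
      using False unfolding U_def R_def V_def T_def by (simp add: mult_ac)
    then show ?thesis by (simp only: one mult_1_right)
  qed
  have fac: "is_factorization N1 J N3 L X r U V R T"
    unfolding is_factorization_def slice_eq slice_def
  proof (intro allI impI)
    fix j l i k assume "j < J" "l < L" "i < N1" "k < N3"
    then show "X i j k l = (\<Sum>s<r. U i s * R j s * V k s * T l s)"
      using dec entry unfolding is_rank1_decomp_def by simp
  qed
  have nU: "vnorm2 N1 (\<lambda>i. U i d) = (if p d = 0 then 0 else q d)" for d
    unfolding U_def using pos[of d] qnn[of d] by (intro vn_if) auto
  have nV: "vnorm2 N3 (\<lambda>i. V i d) = (if p d = 0 then 0 else q d)" for d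
    unfolding V_def using pos[of d] qnn[of d] by (intro vn_if) auto
  have nR: "vnorm2 J (\<lambda>i. R i d) = (if p d = 0 then 0 else \<rho>)" for d
    unfolding R_def using pos[of d] rnn by (intro vn_if) auto
  have nT: "vnorm2 L (\<lambda>i. T i d) = (if p d = 0 then 0 else \<rho>)" for d
    unfolding T_def using pos[of d] rnn by (intro vn_if) auto
  have tm: "((vnorm2 N1 (\<lambda>i. U i d))^2 * (vnorm2 J (\<lambda>j. R j d) * vnorm2 L (\<lambda>l. T l d))^2
           + (sqrt (real J * real L))^2 * (vnorm2 N3 (\<lambda>k. V k d))^2
           + (vnorm2 N3 (\<lambda>k. V k d))^2 * (vnorm2 J (\<lambda>j. R j d) * vnorm2 L (\<lambda>l. T l d))^2
           + (sqrt (real J * real L))^2 * (vnorm2 N1 (\<lambda>i. U i d))^2) / (4 * sqrt (real J * real L)) = p d" for d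
  proof (cases "p d = 0")
    case True then show ?thesis by (simp add: nU nV nR nT)
  next
    case False
    have "(\<rho> * \<rho>)^2 = s^2" using rho2 by (simp add: power2_eq_square)
    moreover have "q d * q d = p d / s" using q2[of d] by (simp add: power2_eq_square)
    ultimately show ?thesis using False s unfolding s_def[symmetric]
      by (simp add: nU nV nR nT field_simps power2_eq_square)
  qed
  have "fact_objective N1 J N3 L r U V R T = cost N1 J N3 L r a1 a2 a3 a4"
    unfolding obj_formula2[OF J L] tm cost_def p_def ..
  with fac show ?thesis by blast
qed




lemma dep:
  fixes w :: "'i \<Rightarrow> 's \<Rightarrow> real"
  assumes "finite S" "finite I" "card S < card I"
  shows "\<exists>\<mu>. (\<exists>m\<in>I. \<mu> m \<noteq> 0) \<and> (\<forall>x\<in>S. (\<Sum>m\<in>I. \<mu> m * w m x) = 0)"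
  using assms
proof (induction S arbitrary: I w rule: finite_induct)
  case empty
  then have "I \<noteq> {}" by auto
  then show ?case by (intro exI[of _ "\<lambda>_. 1"]) auto
next
  case (insert s S I w)
  have cS: "card (insert s S) = Suc (card S)" using insert.hyps by simp
  show ?case
  proof (cases "\<forall>m\<in>I. w m s = 0")
    case True
    obtain \<mu> where \<mu>: "\<exists>m\<in>I. \<mu> m \<noteq> 0" "\<forall>x\<in>S. (\<Sum>m\<in>I. \<mu> m * w m x) = 0"
      using insert.IH[of I w] insert.prems cS by auto
    show ?thesis using \<mu> True by (intro exI[of _ \<mu>]) auto
  next
    case False
    then obtain m0 where m0: "m0 \<in> I" "w m0 s \<noteq> 0" by auto
    define I0 where "I0 = I - {m0}"
    define w' where "w' m x = w m x - (w m s / w m0 s) * w m0 x" for m x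
    have fI0: "finite I0" using insert.prems unfolding I0_def by simp
    have "card I0 = card I - 1" unfolding I0_def using m0 insert.prems by simp
    then have "card S < card I0" using insert.prems cS by simp
    then obtain \<mu>' where \<mu>': "\<exists>m\<in>I0. \<mu>' m \<noteq> 0" "\<forall>x\<in>S. (\<Sum>m\<in>I0. \<mu>' m * w' m x) = 0"
      using insert.IH[of I0 w'] fI0 by auto
    define \<mu> where "\<mu> m = (if m = m0 then - (\<Sum>m\<in>I0. \<mu>' m * w m s) / w m0 s else \<mu>' m)" for m
    have key: "(\<Sum>m\<in>I. \<mu> m * w m x) = (\<Sum>m\<in>I0. \<mu>' m * w' m x)" for x
    proof -
      have "(\<Sum>m\<in>I. \<mu> m * w m x) = \<mu> m0 * w m0 x + (\<Sum>m\<in>I0. \<mu> m * w m x)"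
        unfolding I0_def using m0 insert.prems by (simp add: sum.remove)
      also have "(\<Sum>m\<in>I0. \<mu> m * w m x) = (\<Sum>m\<in>I0. \<mu>' m * w m x)"
        unfolding \<mu>_def I0_def by (intro sum.cong) auto
      also have "(\<Sum>m\<in>I0. \<mu>' m * w' m x) = (\<Sum>m\<in>I0. \<mu>' m * w m x) - (\<Sum>m\<in>I0. \<mu>' m * w m s) / w m0 s * w m0 x"
        unfolding w'_def by (simp add: right_diff_distrib sum_subtractf sum_distrib_left sum_distrib_right sum_divide_distrib mult_ac)
      ultimately show ?thesis unfolding \<mu>_def by simp
    qed
    have ws: "w' m s = 0" for m unfolding w'_def using m0 by simp
    show ?thesis
    proof (intro exI[of _ \<mu>] conjI)
      show "\<exists>m\<in>I. \<mu> m \<noteq> 0" using \<mu>' unfolding \<mu>_def I0_def by auto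
      show "\<forall>x\<in>insert s S. (\<Sum>m\<in>I. \<mu> m * w m x) = 0"
        using \<mu>'(2) ws by (auto simp: key)
    qed
  qed
qed




lemma cara_step:
  fixes w :: "'i \<Rightarrow> 's \<Rightarrow> real" and p lam :: "'i \<Rightarrow> real"
  assumes S: "finite S" and I: "finite I" and lam: "\<forall>m\<in>I. lam m \<ge> 0" and p: "\<forall>m\<in>I. p m \<ge> 0"
    and pw: "\<forall>m\<in>I. p m = 0 \<longrightarrow> (\<forall>x\<in>S. w m x = 0)" and card: "card S < card I"
  shows "\<exists>m0\<in>I. \<exists>lam'. (\<forall>m\<in>I - {m0}. lam' m \<ge> 0) \<and>
     (\<forall>x\<in>S. (\<Sum>m\<in>I-{m0}. lam' m * w m x) = (\<Sum>m\<in>I. lam m * w m x)) \<and>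
     (\<Sum>m\<in>I-{m0}. lam' m * p m) \<le> (\<Sum>m\<in>I. lam m * p m)"
proof (cases "\<exists>m0\<in>I. p m0 = 0 \<or> lam m0 = 0")
  case True
  then obtain m0 where m0: "m0 \<in> I" "p m0 = 0 \<or> lam m0 = 0" by blast
  have "(\<Sum>m\<in>I. lam m * w m x) = lam m0 * w m0 x + (\<Sum>m\<in>I-{m0}. lam m * w m x)" for x
    using m0 I by (simp add: sum.remove)
  moreover have "(\<Sum>m\<in>I. lam m * p m) = lam m0 * p m0 + (\<Sum>m\<in>I-{m0}. lam m * p m)"
    using m0 I by (simp add: sum.remove)
  moreover have "x \<in> S \<Longrightarrow> lam m0 * w m0 x = 0" for x using m0 pw by auto
  moreover have "lam m0 * p m0 = 0" using m0 by auto
  ultimately show ?thesis using m0 lam by (intro bexI[of _ m0] exI[of _ lam]) auto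
next
  case False
  then have pos: "\<forall>m\<in>I. p m > 0 \<and> lam m > 0" using lam p by force
  obtain \<mu>0 where \<mu>0: "\<exists>m\<in>I. \<mu>0 m \<noteq> 0" "\<forall>x\<in>S. (\<Sum>m\<in>I. \<mu>0 m * w m x) = 0"
    using dep[OF S I card, of w] by blast
  define \<mu> where "\<mu> = (if (\<Sum>m\<in>I. \<mu>0 m * p m) \<le> 0 then \<mu>0 else (\<lambda>m. - \<mu>0 m))"
  have \<mu>1: "\<exists>m\<in>I. \<mu> m \<noteq> 0" using \<mu>0(1) unfolding \<mu>_def by auto
  have \<mu>2: "\<forall>x\<in>S. (\<Sum>m\<in>I. \<mu> m * w m x) = 0" using \<mu>0(2) unfolding \<mu>_def by (auto simp: sum_negf)
  have \<mu>3: "(\<Sum>m\<in>I. \<mu> m * p m) \<le> 0" unfolding \<mu>_def by (auto simp: sum_negf)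
  have neg: "\<exists>m\<in>I. \<mu> m < 0"
  proof (rule ccontr)
    assume "\<not> ?thesis"
    then have nn: "\<forall>m\<in>I. \<mu> m * p m \<ge> 0" using pos by (meson less_eq_real_def mult_nonneg_nonneg not_le)
    then have "(\<Sum>m\<in>I. \<mu> m * p m) = 0" proof -
      have "(\<Sum>m\<in>I. \<mu> m * p m) \<ge> 0" using nn by (intro sum_nonneg) auto
      then show ?thesis using \<mu>3 by linarith
    qed
    then have "\<forall>m\<in>I. \<mu> m * p m = 0" using nn I by (simp add: sum_nonneg_eq_0_iff)
    then show False using \<mu>1 pos by (metis less_irrefl mult_eq_0_iff)
  qed
  define N where "N = {m\<in>I. \<mu> m < 0}"
  have fN: "finite N" "N \<noteq> {}" using I neg unfolding N_def by auto
  define t where "t = Min ((\<lambda>m. lam m / (- \<mu> m)) ` N)"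
  have "t \<in> (\<lambda>m. lam m / (- \<mu> m)) ` N" unfolding t_def using fN by (intro Min_in) auto
  then obtain m0 where m0: "m0 \<in> N" "t = lam m0 / (- \<mu> m0)" by auto
  have tle: "t \<le> lam m / (- \<mu> m)" if "m \<in> N" for m
    unfolding t_def using fN that by (intro Min_le) auto
  have m0I: "m0 \<in> I" "\<mu> m0 < 0" using m0 unfolding N_def by auto
  have t0: "t \<ge> 0" using m0 m0I pos by (simp add: divide_nonneg_neg less_imp_le)
  define lam' where "lam' m = lam m + t * \<mu> m" for m
  have l0: "lam' m0 = 0" unfolding lam'_def m0(2) using m0I by (simp add: field_simps)
  have lnn: "lam' m \<ge> 0" if "m \<in> I" for m
  proof (cases "\<mu> m < 0")
    case True
    then have "m \<in> N" using that unfolding N_def by auto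
    from tle[OF this] have "t * (- \<mu> m) \<le> lam m" using True by (simp add: field_simps)
    then show ?thesis unfolding lam'_def by simp
  next
    case False
    then show ?thesis unfolding lam'_def using t0 pos that by (simp add: add_nonneg_nonneg less_imp_le)
  qed
  have sw: "(\<Sum>m\<in>I-{m0}. lam' m * w m x) = (\<Sum>m\<in>I. lam m * w m x)" if "x \<in> S" for x
  proof -
    have "(\<Sum>m\<in>I. lam' m * w m x) = (\<Sum>m\<in>I. lam m * w m x) + t * (\<Sum>m\<in>I. \<mu> m * w m x)"
      unfolding lam'_def sum_distrib_left sum.distrib[symmetric] by (intro sum.cong) (auto simp: algebra_simps)
    also have "\<dots> = (\<Sum>m\<in>I. lam m * w m x)" using \<mu>2 that by simp
    finally show ?thesis using I m0I l0 by (simp add: sum.remove)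
  qed
  have sp: "(\<Sum>m\<in>I-{m0}. lam' m * p m) \<le> (\<Sum>m\<in>I. lam m * p m)"
  proof -
    have "(\<Sum>m\<in>I. lam' m * p m) = (\<Sum>m\<in>I. lam m * p m) + t * (\<Sum>m\<in>I. \<mu> m * p m)"
      unfolding lam'_def sum_distrib_left sum.distrib[symmetric] by (intro sum.cong) (auto simp: algebra_simps)
    also have "\<dots> \<le> (\<Sum>m\<in>I. lam m * p m)" using \<mu>3 t0 by (simp add: mult_nonneg_nonpos)
    finally show ?thesis using I m0I l0 by (simp add: sum.remove)
  qed
  show ?thesis using m0I lnn sw sp by (intro bexI[of _ m0] exI[of _ lam']) auto
qed

lemma cara:
  fixes w :: "'i \<Rightarrow> 's \<Rightarrow> real" and p lam :: "'i \<Rightarrow> real"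
  assumes S: "finite S"
  shows "finite I \<Longrightarrow> \<forall>m\<in>I. lam m \<ge> 0 \<Longrightarrow> \<forall>m\<in>I. p m \<ge> 0 \<Longrightarrow> \<forall>m\<in>I. p m = 0 \<longrightarrow> (\<forall>x\<in>S. w m x = 0) \<Longrightarrow>
    \<exists>I'\<subseteq>I. \<exists>lam'. card I' \<le> card S \<and> (\<forall>m\<in>I'. lam' m \<ge> 0) \<and>
     (\<forall>x\<in>S. (\<Sum>m\<in>I'. lam' m * w m x) = (\<Sum>m\<in>I. lam m * w m x)) \<and>
     (\<Sum>m\<in>I'. lam' m * p m) \<le> (\<Sum>m\<in>I. lam m * p m)"
proof (induction "card I" arbitrary: I lam rule: less_induct)
  case less
  show ?case
  proof (cases "card I \<le> card S")
    case True
    then show ?thesis using less.prems by (intro exI[of _ I]) auto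
  next
    case False
    then obtain m0 lam' where m0: "m0 \<in> I" and l1: "\<forall>m\<in>I - {m0}. lam' m \<ge> 0"
      and l2: "\<forall>x\<in>S. (\<Sum>m\<in>I-{m0}. lam' m * w m x) = (\<Sum>m\<in>I. lam m * w m x)"
      and l3: "(\<Sum>m\<in>I-{m0}. lam' m * p m) \<le> (\<Sum>m\<in>I. lam m * p m)"
      using cara_step[OF S less.prems(1,2,3,4)] by force
    have "card (I - {m0}) < card I" using m0 less.prems(1) by (meson card_Diff1_less)
    then obtain I' lam'' where I': "I' \<subseteq> I - {m0}" "card I' \<le> card S" "\<forall>m\<in>I'. lam'' m \<ge> 0"
      "\<forall>x\<in>S. (\<Sum>m\<in>I'. lam'' m * w m x) = (\<Sum>m\<in>I-{m0}. lam' m * w m x)"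
      "(\<Sum>m\<in>I'. lam'' m * p m) \<le> (\<Sum>m\<in>I-{m0}. lam' m * p m)"
      using less.hyps[of "I - {m0}" lam'] less.prems l1 by auto
    show ?thesis using I' l2 l3 by (intro exI[of _ I'] conjI exI[of _ lam'']) auto
  qed
qed




lemma sum_if_less: fixes K M :: nat shows "K \<le> M \<Longrightarrow> (\<Sum>k<M. if k < K then g k else 0) = (\<Sum>k<K. (g k :: real))"
proof -
  assume "K \<le> M"
  then have e: "{..<M} \<inter> {k. k < K} = {..<K}" by (auto simp: less_le_trans)
  have "(\<Sum>k<M. if k < K then g k else 0) = (\<Sum>k\<in>{..<M} \<inter> {k. k < K}. g k)"
    by (simp add: sum.inter_restrict)
  then show ?thesis using e by simp
qed

lemma reduce:
  assumes dec: "is_rank1_decomp n1 n2 n3 n4 X r a1 a2 a3 a4"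
  shows "\<exists>b1 b2 b3 b4. is_rank1_decomp n1 n2 n3 n4 X (n1*n2*n3*n4) b1 b2 b3 b4 \<and>
     cost n1 n2 n3 n4 (n1*n2*n3*n4) b1 b2 b3 b4 \<le> cost n1 n2 n3 n4 r a1 a2 a3 a4"
proof -
  define S where "S = {..<n1} \<times> {..<n2} \<times> {..<n3} \<times> {..<n4}"
  have fS: "finite S" unfolding S_def by simp
  have cS: "card S = n1*n2*n3*n4" unfolding S_def by (simp add: card_cartesian_product)
  define w where "w m x = (case x of (i1,i2,i3,i4) \<Rightarrow> a1 m i1 * a2 m i2 * a3 m i3 * a4 m i4)" for m x
  define p where "p m = vnorm2 n1 (a1 m) * vnorm2 n2 (a2 m) * vnorm2 n3 (a3 m) * vnorm2 n4 (a4 m)" for m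
  have pnn: "\<forall>m\<in>{..<r}. p m \<ge> 0" unfolding p_def by (auto intro!: mult_nonneg_nonneg vnorm2_nonneg)
  have pw: "\<forall>m\<in>{..<r}. p m = 0 \<longrightarrow> (\<forall>x\<in>S. w m x = 0)"
  proof (intro ballI impI)
    fix m x assume "p m = 0" "x \<in> S"
    then show "w m x = 0" unfolding p_def w_def S_def
      by (auto split: prod.splits dest: vnorm2_zero)
  qed
  obtain I' lam' where I': "I' \<subseteq> {..<r}" "card I' \<le> card S" "\<forall>m\<in>I'. lam' m \<ge> 0"
     "\<forall>x\<in>S. (\<Sum>m\<in>I'. lam' m * w m x) = (\<Sum>m\<in>{..<r}. 1 * w m x)"
     "(\<Sum>m\<in>I'. lam' m * p m) \<le> (\<Sum>m\<in>{..<r}. 1 * p m)"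
    using cara[OF fS, of "{..<r}" "\<lambda>_. 1" p w] pnn pw by auto
  have fI': "finite I'" using I'(1) finite_subset by blast
  define K where "K = card I'"
  obtain h where h: "bij_betw h {..<K} I'" using ex_bij_betw_nat_finite[OF fI'] unfolding K_def
    by (auto simp: lessThan_atLeast0)
  define M where "M = n1*n2*n3*n4"
  have KM: "K \<le> M" using I'(2) cS unfolding K_def M_def by simp
  define b1 where "b1 k = (if k < K then (\<lambda>i. lam' (h k) * a1 (h k) i) else (\<lambda>_. 0))" for k
  define b2 where "b2 k = (if k < K then a2 (h k) else (\<lambda>_. 0))" for k
  define b3 where "b3 k = (if k < K then a3 (h k) else (\<lambda>_. 0))" for k
  define b4 where "b4 k = (if k < K then a4 (h k) else (\<lambda>_. 0))" for k
  have decb: "is_rank1_decomp n1 n2 n3 n4 X M b1 b2 b3 b4"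
    unfolding is_rank1_decomp_def
  proof (intro allI impI)
    fix i1 i2 i3 i4 assume i: "i1 < n1" "i2 < n2" "i3 < n3" "i4 < n4"
    then have xS: "(i1,i2,i3,i4) \<in> S" unfolding S_def by auto
    have "(\<Sum>m<M. b1 m i1 * b2 m i2 * b3 m i3 * b4 m i4)
        = (\<Sum>k<M. if k < K then lam' (h k) * w (h k) (i1,i2,i3,i4) else 0)"
      unfolding b1_def b2_def b3_def b4_def w_def by (intro sum.cong) auto
    also have "\<dots> = (\<Sum>k<K. lam' (h k) * w (h k) (i1,i2,i3,i4))" using KM by (rule sum_if_less)
    also have "\<dots> = (\<Sum>m\<in>I'. lam' m * w m (i1,i2,i3,i4))"
      using sum.reindex_bij_betw[OF h, of "\<lambda>m. lam' m * w m (i1,i2,i3,i4)"] .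
    also have "\<dots> = (\<Sum>m<r. w m (i1,i2,i3,i4))" using I'(4) xS by simp
    also have "\<dots> = X i1 i2 i3 i4" using dec i unfolding is_rank1_decomp_def w_def by simp
    finally show "X i1 i2 i3 i4 = (\<Sum>m<M. b1 m i1 * b2 m i2 * b3 m i3 * b4 m i4)" by simp
  qed
  have "cost n1 n2 n3 n4 M b1 b2 b3 b4 = (\<Sum>k<M. if k < K then lam' (h k) * p (h k) else 0)"
    unfolding cost_def
  proof (intro sum.cong refl)
    fix k assume "k \<in> {..<M}"
    show "vnorm2 n1 (b1 k) * vnorm2 n2 (b2 k) * vnorm2 n3 (b3 k) * vnorm2 n4 (b4 k) =
        (if k < K then lam' (h k) * p (h k) else 0)"
    proof (cases "k < K")
      case True
      then have "h k \<in> I'" using h by (auto simp: bij_betw_def)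
      then have "lam' (h k) \<ge> 0" using I'(3) by auto
      then show ?thesis using True unfolding b1_def b2_def b3_def b4_def p_def
        by (simp add: vnorm2_scale mult_ac)
    next
      case False then show ?thesis unfolding b1_def by (simp add: vnorm2_zero_fun)
    qed
  qed
  also have "\<dots> = (\<Sum>k<K. lam' (h k) * p (h k))" using KM by (rule sum_if_less)
  also have "\<dots> = (\<Sum>m\<in>I'. lam' m * p m)"
    using sum.reindex_bij_betw[OF h, of "\<lambda>m. lam' m * p m"] .
  also have "\<dots> \<le> cost n1 n2 n3 n4 r a1 a2 a3 a4" using I'(5) unfolding cost_def p_def by simp
  finally show ?thesis using decb unfolding M_def by blast
qed




definition nz :: "nat \<Rightarrow> (nat \<Rightarrow> real) \<Rightarrow> real \<Rightarrow> nat \<Rightarrow> real" where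
  "nz n a c = (\<lambda>i. if i < n then a i * (c / vnorm2 n a) else 0)"

lemma nz_norm: "vnorm2 n a > 0 \<Longrightarrow> c \<ge> 0 \<Longrightarrow> vnorm2 n (nz n a c) = c"
proof -
  assume "vnorm2 n a > 0" "c \<ge> 0"
  then have "vnorm2 n (\<lambda>i. a i * (c / vnorm2 n a)) = c" by (intro vnorm2_col_scale) auto
  moreover have "vnorm2 n (nz n a c) = vnorm2 n (\<lambda>i. a i * (c / vnorm2 n a))"
    unfolding nz_def by (rule vnorm2_cong) simp
  ultimately show ?thesis by simp
qed

lemma nz_bound: "vnorm2 n a > 0 \<Longrightarrow> c \<ge> 0 \<Longrightarrow> \<bar>nz n a c i\<bar> \<le> c"
proof (cases "i < n")
  case True
  assume "vnorm2 n a > 0" "c \<ge> 0"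
  then show ?thesis using abs_le_vnorm2[OF True, of "nz n a c"] nz_norm by simp
next
  case False
  assume "c \<ge> 0"
  then show ?thesis using False unfolding nz_def by simp
qed

lemma nz_val: "i < n \<Longrightarrow> nz n a c i = a i * (c / vnorm2 n a)"
  unfolding nz_def by simp

lemma normalize:
  assumes dec: "is_rank1_decomp n1 n2 n3 n4 X M a1 a2 a3 a4"
  shows "\<exists>b1 b2 b3 b4. is_rank1_decomp n1 n2 n3 n4 X M b1 b2 b3 b4 \<and>
     cost n1 n2 n3 n4 M b1 b2 b3 b4 = cost n1 n2 n3 n4 M a1 a2 a3 a4 \<and>
     (\<forall>m i. \<bar>b1 m i\<bar> \<le> sqrt (sqrt (cost n1 n2 n3 n4 M a1 a2 a3 a4)) \<and>
            \<bar>b2 m i\<bar> \<le> sqrt (sqrt (cost n1 n2 n3 n4 M a1 a2 a3 a4)) \<and>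
            \<bar>b3 m i\<bar> \<le> sqrt (sqrt (cost n1 n2 n3 n4 M a1 a2 a3 a4)) \<and>
            \<bar>b4 m i\<bar> \<le> sqrt (sqrt (cost n1 n2 n3 n4 M a1 a2 a3 a4)))"
proof -
  define p where "p m = vnorm2 n1 (a1 m) * vnorm2 n2 (a2 m) * vnorm2 n3 (a3 m) * vnorm2 n4 (a4 m)" for m
  define q where "q m = sqrt (sqrt (p m))" for m
  define C where "C = cost n1 n2 n3 n4 M a1 a2 a3 a4"
  have pnn: "p m \<ge> 0" for m unfolding p_def by (intro mult_nonneg_nonneg vnorm2_nonneg)
  have pos: "vnorm2 n1 (a1 m) > 0 \<and> vnorm2 n2 (a2 m) > 0 \<and> vnorm2 n3 (a3 m) > 0 \<and> vnorm2 n4 (a4 m) > 0"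
    if "p m \<noteq> 0" for m
    using that vnorm2_nonneg[of n1 "a1 m"] vnorm2_nonneg[of n2 "a2 m"] vnorm2_nonneg[of n3 "a3 m"] vnorm2_nonneg[of n4 "a4 m"]
    unfolding p_def by (metis less_eq_real_def mult_zero_left mult_zero_right)
  have q4: "q m * q m * q m * q m = p m" for m
  proof -
    have qq: "q m * q m = sqrt (p m)" unfolding q_def using pnn[of m] by (simp add: real_sqrt_mult_self)
    have "q m * q m * q m * q m = (q m * q m) * (q m * q m)" by (simp add: mult.assoc)
    also have "\<dots> = p m" unfolding qq using pnn[of m] by (simp add: real_sqrt_mult_self)
    finally show ?thesis .
  qed
  have qnn: "q m \<ge> 0" for m unfolding q_def using pnn[of m] by simp
  have pC: "p m \<le> C" if "m < M" for m
  proof -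
    have "p m \<le> (\<Sum>m<M. p m)" using that pnn by (intro member_le_sum) auto
    then show ?thesis unfolding C_def cost_def p_def by simp
  qed
  have qC: "q m \<le> sqrt (sqrt C)" if "m < M" for m unfolding q_def using pC[OF that] by simp
  define b1 where "b1 m = (if m < M \<and> p m \<noteq> 0 then nz n1 (a1 m) (q m) else (\<lambda>_. 0))" for m
  define b2 where "b2 m = (if m < M \<and> p m \<noteq> 0 then nz n2 (a2 m) (q m) else (\<lambda>_. 0))" for m
  define b3 where "b3 m = (if m < M \<and> p m \<noteq> 0 then nz n3 (a3 m) (q m) else (\<lambda>_. 0))" for m
  define b4 where "b4 m = (if m < M \<and> p m \<noteq> 0 then nz n4 (a4 m) (q m) else (\<lambda>_. 0))" for m
  have Cnn: "C \<ge> 0" unfolding C_def by (rule cost_nonneg)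
  have bnd: "\<bar>b m i\<bar> \<le> sqrt (sqrt C)"
    if "b = (\<lambda>m. if m < M \<and> p m \<noteq> 0 then nz n (a m) (q m) else (\<lambda>_. 0))" "\<And>m. p m \<noteq> 0 \<Longrightarrow> vnorm2 n (a m) > 0"
    for b n a m i
  proof (cases "m < M \<and> p m \<noteq> 0")
    case True
    then have "\<bar>b m i\<bar> \<le> q m" using that nz_bound[of n "a m" "q m" i] qnn by simp
    then show ?thesis using qC[of m] True by linarith
  next
    case False
    have "b m i = 0" using that(1) False by auto
    then show ?thesis using Cnn by simp
  qed
  have entry: "b1 m i1 * b2 m i2 * b3 m i3 * b4 m i4 = a1 m i1 * a2 m i2 * a3 m i3 * a4 m i4"
    if "i1 < n1" "i2 < n2" "i3 < n3" "i4 < n4" "m < M" for m i1 i2 i3 i4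
  proof (cases "p m = 0")
    case True
    then have "vnorm2 n1 (a1 m) = 0 \<or> vnorm2 n2 (a2 m) = 0 \<or> vnorm2 n3 (a3 m) = 0 \<or> vnorm2 n4 (a4 m) = 0"
      unfolding p_def by auto
    then have "a1 m i1 = 0 \<or> a2 m i2 = 0 \<or> a3 m i3 = 0 \<or> a4 m i4 = 0"
      using that vnorm2_zero by blast
    then show ?thesis using True unfolding b1_def b2_def b3_def b4_def by auto
  next
    case False
    note P = pos[OF False]
    have "(q m / vnorm2 n1 (a1 m)) * (q m / vnorm2 n2 (a2 m)) * (q m / vnorm2 n3 (a3 m)) * (q m / vnorm2 n4 (a4 m))
       = (q m * q m * q m * q m) / p m"
      unfolding p_def by simp
    also have "\<dots> = 1" using False q4 by simp
    finally have one: "(q m / vnorm2 n1 (a1 m)) * (q m / vnorm2 n2 (a2 m)) * (q m / vnorm2 n3 (a3 m)) * (q m / vnorm2 n4 (a4 m)) = 1" .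
    have "b1 m i1 * b2 m i2 * b3 m i3 * b4 m i4 = (a1 m i1 * a2 m i2 * a3 m i3 * a4 m i4) *
       ((q m / vnorm2 n1 (a1 m)) * (q m / vnorm2 n2 (a2 m)) * (q m / vnorm2 n3 (a3 m)) * (q m / vnorm2 n4 (a4 m)))"
      using False that unfolding b1_def b2_def b3_def b4_def by (simp add: nz_val mult_ac)
    then show ?thesis by (simp only: one mult_1_right)
  qed
  have decb: "is_rank1_decomp n1 n2 n3 n4 X M b1 b2 b3 b4"
    using dec entry unfolding is_rank1_decomp_def by simp
  have "cost n1 n2 n3 n4 M b1 b2 b3 b4 = (\<Sum>m<M. p m)"
    unfolding cost_def
  proof (intro sum.cong refl)
    fix m assume m: "m \<in> {..<M}"
    show "vnorm2 n1 (b1 m) * vnorm2 n2 (b2 m) * vnorm2 n3 (b3 m) * vnorm2 n4 (b4 m) = p m"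
    proof (cases "p m = 0")
      case True then show ?thesis unfolding b1_def by (simp add: vnorm2_zero_fun)
    next
      case False
      then show ?thesis using m pos[OF False] qnn[of m] q4[of m]
        unfolding b1_def b2_def b3_def b4_def by (simp add: nz_norm)
    qed
  qed
  then have "cost n1 n2 n3 n4 M b1 b2 b3 b4 = C" unfolding C_def cost_def p_def by simp
  moreover have "\<forall>m i. \<bar>b1 m i\<bar> \<le> sqrt (sqrt C) \<and> \<bar>b2 m i\<bar> \<le> sqrt (sqrt C) \<and> \<bar>b3 m i\<bar> \<le> sqrt (sqrt C) \<and> \<bar>b4 m i\<bar> \<le> sqrt (sqrt C)"
  proof (intro allI conjI)
    fix m i
    have v1: "\<And>m. p m \<noteq> 0 \<Longrightarrow> vnorm2 n1 (a1 m) > 0" using pos by blast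
    have v2: "\<And>m. p m \<noteq> 0 \<Longrightarrow> vnorm2 n2 (a2 m) > 0" using pos by blast
    have v3: "\<And>m. p m \<noteq> 0 \<Longrightarrow> vnorm2 n3 (a3 m) > 0" using pos by blast
    have v4: "\<And>m. p m \<noteq> 0 \<Longrightarrow> vnorm2 n4 (a4 m) > 0" using pos by blast
    show "\<bar>b1 m i\<bar> \<le> sqrt (sqrt C)" by (rule bnd[OF b1_def[abs_def, THEN meta_eq_to_obj_eq] v1])
    show "\<bar>b2 m i\<bar> \<le> sqrt (sqrt C)" by (rule bnd[OF b2_def[abs_def, THEN meta_eq_to_obj_eq] v2])
    show "\<bar>b3 m i\<bar> \<le> sqrt (sqrt C)" by (rule bnd[OF b3_def[abs_def, THEN meta_eq_to_obj_eq] v3])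
    show "\<bar>b4 m i\<bar> \<le> sqrt (sqrt C)" by (rule bnd[OF b4_def[abs_def, THEN meta_eq_to_obj_eq] v4])
  qed
  ultimately show ?thesis using decb unfolding C_def by blast
qed




lemma idx_lt: "(a::nat) < n \<Longrightarrow> b < m \<Longrightarrow> a + n * b < n * m"
proof -
  assume "a < n" "b < m"
  then have "a + n * b < n + n * b" by simp
  also have "\<dots> = n * (b + 1)" by simp
  also have "\<dots> \<le> n * m" using \<open>b < m\<close> by (intro mult_le_mono2) simp
  finally show ?thesis .
qed

lemma exists_decomp: "\<exists>r a1 a2 a3 a4. is_rank1_decomp n1 n2 n3 n4 X r a1 a2 a3 a4"
proof -
  define a1 where "a1 m i = (if i = m mod n1 then 1 else 0 :: real)" for m i
  define a2 where "a2 m j = (if j = (m div n1) mod n2 then 1 else 0 :: real)" for m j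
  define a3 where "a3 m k = (if k = m div (n1 * n2) then 1 else 0 :: real)" for m k
  define a4 where "a4 m l = X (m mod n1) ((m div n1) mod n2) (m div (n1 * n2)) l" for m l
  have "is_rank1_decomp n1 n2 n3 n4 X (n1*(n2*n3)) a1 a2 a3 a4"
    unfolding is_rank1_decomp_def
  proof (intro allI impI)
    fix i j k l assume ijkl: "i < n1" "j < n2" "k < n3" "l < n4"
    define m0 where "m0 = i + n1 * (j + n2 * k)"
    have m0lt: "m0 < n1 * (n2 * n3)" unfolding m0_def
      using idx_lt[OF ijkl(1) idx_lt[OF ijkl(2) ijkl(3)]] .
    have n1: "n1 > 0" and n2: "n2 > 0" using ijkl by auto
    have dm: "m div (n1 * n2) = m div n1 div n2" for m by (simp add: div_mult2_eq)
    have iff: "(m mod n1 = i \<and> (m div n1) mod n2 = j \<and> m div (n1 * n2) = k) \<longleftrightarrow> m = m0" for m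
    proof
      assume H: "m mod n1 = i \<and> (m div n1) mod n2 = j \<and> m div (n1 * n2) = k"
      have e1: "m = m mod n1 + n1 * (m div n1)" by (rule mod_mult_div_eq[symmetric])
      have e2: "m div n1 = (m div n1) mod n2 + n2 * (m div n1 div n2)" by (rule mod_mult_div_eq[symmetric])
      have "m div n1 = j + n2 * k" using e2 H dm[of m] by simp
      then show "m = m0" unfolding m0_def using e1 H by simp
    next
      assume "m = m0"
      have A: "m0 mod n1 = i" unfolding m0_def using ijkl(1) by simp
      have B: "m0 div n1 = j + n2 * k" unfolding m0_def using ijkl(1) n1 by simp
      have C: "(j + n2 * k) mod n2 = j" using ijkl(2) by simp
      have D: "(j + n2 * k) div n2 = k" using ijkl(2) n2 by simp
      show "m mod n1 = i \<and> (m div n1) mod n2 = j \<and> m div (n1 * n2) = k"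
        unfolding \<open>m = m0\<close> dm B using A C D by simp
    qed
    have term1: "a1 m i * a2 m j * a3 m k * a4 m l = (if m = m0 then X i j k l else 0)" for m
    proof (cases "m mod n1 = i \<and> (m div n1) mod n2 = j \<and> m div (n1 * n2) = k")
      case True
      then have "m = m0" using iff by blast
      then show ?thesis using True unfolding a1_def a2_def a3_def a4_def by simp
    next
      case False
      then have "m \<noteq> m0" using iff by blast
      then show ?thesis using False unfolding a1_def a2_def a3_def by auto
    qed
    have "(\<Sum>m<n1*(n2*n3). a1 m i * a2 m j * a3 m k * a4 m l) = (\<Sum>m<n1*(n2*n3). if m = m0 then X i j k l else 0)"
      by (simp only: term1)
    also have "\<dots> = X i j k l" using m0lt by simp
    finally show "X i j k l = (\<Sum>m<n1*(n2*n3). a1 m i * a2 m j * a3 m k * a4 m l)" by simp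
  qed
  then show ?thesis by blast
qed




lemma cont_coord [continuous_intros]: "continuous_on S (\<lambda>F::nat \<Rightarrow> nat \<Rightarrow> nat \<Rightarrow> real. F c m i)"
proof -
  have "continuous_on S (\<lambda>F::nat \<Rightarrow> nat \<Rightarrow> nat \<Rightarrow> real. F)" by (rule continuous_on_id)
  then have "continuous_on S (\<lambda>F::nat \<Rightarrow> nat \<Rightarrow> nat \<Rightarrow> real. F c)" by (rule continuous_on_product_then_coordinatewise)
  then have "continuous_on S (\<lambda>F::nat \<Rightarrow> nat \<Rightarrow> nat \<Rightarrow> real. F c m)" by (rule continuous_on_product_then_coordinatewise)
  then show ?thesis by (rule continuous_on_product_then_coordinatewise)
qed

lemma compact_box_fun:
  fixes S :: "'i \<Rightarrow> 'b::topological_space set"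
  assumes "\<And>i. compact (S i)"
  shows "compact (PiE UNIV S)"
proof -
  have "compactin (product_topology (\<lambda>i. euclidean) UNIV) (PiE UNIV S)"
    using assms by (simp add: compactin_PiE)
  then show ?thesis by (simp add: euclidean_product_topology)
qed

lemma cost_cont: "continuous_on UNIV (\<lambda>F :: nat \<Rightarrow> nat \<Rightarrow> nat \<Rightarrow> real. cost n1 n2 n3 n4 M (F 0) (F 1) (F 2) (F 3))"
  unfolding cost_def vnorm2_def by (intro continuous_intros)

lemma dec_closed: "closed {F :: nat \<Rightarrow> nat \<Rightarrow> nat \<Rightarrow> real. is_rank1_decomp n1 n2 n3 n4 X M (F 0) (F 1) (F 2) (F 3)}"
proof -
  have "{F :: nat \<Rightarrow> nat \<Rightarrow> nat \<Rightarrow> real. is_rank1_decomp n1 n2 n3 n4 X M (F 0) (F 1) (F 2) (F 3)} =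
     (\<Inter>i1\<in>{..<n1}. \<Inter>i2\<in>{..<n2}. \<Inter>i3\<in>{..<n3}. \<Inter>i4\<in>{..<n4}.
        {F. X i1 i2 i3 i4 = (\<Sum>m<M. F 0 m i1 * F 1 m i2 * F 2 m i3 * F 3 m i4)})"
    unfolding is_rank1_decomp_def by auto
  also have "closed \<dots>"
    by (intro closed_INT ballI closed_Collect_eq continuous_intros)
  finally show ?thesis .
qed

lemma box_compact: "compact (PiE UNIV (\<lambda>_. PiE UNIV (\<lambda>_. PiE UNIV (\<lambda>_. {-B..B::real}))) :: (nat \<Rightarrow> nat \<Rightarrow> nat \<Rightarrow> real) set)"
  by (intro compact_box_fun compact_Icc)

lemma box_mem: "F \<in> PiE UNIV (\<lambda>_. PiE UNIV (\<lambda>_. PiE UNIV (\<lambda>_. {-B..B::real}))) \<longleftrightarrow> (\<forall>c m i. \<bar>F c m i\<bar> \<le> B)"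
  by (auto simp: PiE_UNIV_domain Pi_iff abs_le_iff) (metis minus_le_iff)+


lemma attain: "\<exists>r a1 a2 a3 a4. is_rank1_decomp n1 n2 n3 n4 X r a1 a2 a3 a4 \<and>
   cost n1 n2 n3 n4 r a1 a2 a3 a4 = nuclear_norm n1 n2 n3 n4 X"
proof -
  define M where "M = n1*n2*n3*n4"
  obtain r0 a01 a02 a03 a04 where d0: "is_rank1_decomp n1 n2 n3 n4 X r0 a01 a02 a03 a04"
    using exists_decomp by blast
  define c0 where "c0 = cost n1 n2 n3 n4 r0 a01 a02 a03 a04"
  define B where "B = sqrt (sqrt c0)"
  define Bx where "Bx = (PiE UNIV (\<lambda>_. PiE UNIV (\<lambda>_. PiE UNIV (\<lambda>_. {-B..B::real}))) :: (nat \<Rightarrow> nat \<Rightarrow> nat \<Rightarrow> real) set)"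
  define K where "K = Bx \<inter> {F :: nat \<Rightarrow> nat \<Rightarrow> nat \<Rightarrow> real. is_rank1_decomp n1 n2 n3 n4 X M (F 0) (F 1) (F 2) (F 3)}"
  define cf where "cf F = cost n1 n2 n3 n4 M (F 0) (F 1) (F 2) (F 3)" for F :: "nat \<Rightarrow> nat \<Rightarrow> nat \<Rightarrow> real"
  have inK: "\<exists>F\<in>K. cf F \<le> cost n1 n2 n3 n4 r a1 a2 a3 a4"
    if d: "is_rank1_decomp n1 n2 n3 n4 X r a1 a2 a3 a4" and c: "cost n1 n2 n3 n4 r a1 a2 a3 a4 \<le> c0" for r a1 a2 a3 a4
  proof -
    obtain b1 b2 b3 b4 where b: "is_rank1_decomp n1 n2 n3 n4 X M b1 b2 b3 b4"
      "cost n1 n2 n3 n4 M b1 b2 b3 b4 \<le> cost n1 n2 n3 n4 r a1 a2 a3 a4"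
      using reduce[OF d] unfolding M_def by blast
    obtain e1 e2 e3 e4 where e: "is_rank1_decomp n1 n2 n3 n4 X M e1 e2 e3 e4"
      "cost n1 n2 n3 n4 M e1 e2 e3 e4 = cost n1 n2 n3 n4 M b1 b2 b3 b4"
      "\<forall>m i. \<bar>e1 m i\<bar> \<le> sqrt (sqrt (cost n1 n2 n3 n4 M b1 b2 b3 b4)) \<and>
            \<bar>e2 m i\<bar> \<le> sqrt (sqrt (cost n1 n2 n3 n4 M b1 b2 b3 b4)) \<and>
            \<bar>e3 m i\<bar> \<le> sqrt (sqrt (cost n1 n2 n3 n4 M b1 b2 b3 b4)) \<and>
            \<bar>e4 m i\<bar> \<le> sqrt (sqrt (cost n1 n2 n3 n4 M b1 b2 b3 b4))"
      using normalize[OF b(1)] by blast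
    have le: "sqrt (sqrt (cost n1 n2 n3 n4 M b1 b2 b3 b4)) \<le> B"
      unfolding B_def using b(2) c by simp
    define F where "F = (\<lambda>c::nat. if c = 0 then e1 else if c = 1 then e2 else if c = 2 then e3 else e4)"
    have F0: "F 0 = e1" "F 1 = e2" "F 2 = e3" "F 3 = e4" unfolding F_def by auto
    have "\<forall>c m i. \<bar>F c m i\<bar> \<le> B"
    proof (intro allI)
      fix c m i
      have h: "\<bar>e1 m i\<bar> \<le> B \<and> \<bar>e2 m i\<bar> \<le> B \<and> \<bar>e3 m i\<bar> \<le> B \<and> \<bar>e4 m i\<bar> \<le> B"
        using e(3)[rule_format, of m i] le by linarith
      show "\<bar>F c m i\<bar> \<le> B" unfolding F_def using h by auto
    qed
    then have "F \<in> Bx" unfolding Bx_def box_mem .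
    then have "F \<in> K" unfolding K_def using e(1) F0 by simp
    moreover have "cf F \<le> cost n1 n2 n3 n4 r a1 a2 a3 a4" unfolding cf_def F0 using e(2) b(2) by simp
    ultimately show ?thesis by blast
  qed
  obtain F0 where F0: "F0 \<in> K" "cf F0 \<le> c0" using inK[OF d0] unfolding c0_def by auto
  have cK: "compact K" unfolding K_def Bx_def by (intro compact_Int_closed box_compact dec_closed)
  have contK: "continuous_on K cf" unfolding cf_def by (rule continuous_on_subset[OF cost_cont]) simp
  obtain Fs where Fs: "Fs \<in> K" "\<forall>y\<in>K. cf Fs \<le> cf y"
    using continuous_attains_inf[OF cK _ contK] F0(1) by blast
  have decs: "is_rank1_decomp n1 n2 n3 n4 X M (Fs 0) (Fs 1) (Fs 2) (Fs 3)" using Fs(1) unfolding K_def by simp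
  have lower: "cf Fs \<le> cost n1 n2 n3 n4 r a1 a2 a3 a4" if d: "is_rank1_decomp n1 n2 n3 n4 X r a1 a2 a3 a4" for r a1 a2 a3 a4
  proof (cases "cost n1 n2 n3 n4 r a1 a2 a3 a4 \<le> c0")
    case True
    then obtain F where "F \<in> K" "cf F \<le> cost n1 n2 n3 n4 r a1 a2 a3 a4" using inK[OF d] by blast
    then show ?thesis using Fs(2) by force
  next
    case False
    then show ?thesis using Fs(2) F0 by force
  qed
  have "cf Fs \<le> nuclear_norm n1 n2 n3 n4 X"
    unfolding nuclear_norm_def
  proof (rule cInf_greatest)
    show "{(\<Sum>m<r. vnorm2 n1 (a1 m) * vnorm2 n2 (a2 m) * vnorm2 n3 (a3 m) * vnorm2 n4 (a4 m)) |
        r a1 a2 a3 a4. is_rank1_decomp n1 n2 n3 n4 X r a1 a2 a3 a4} \<noteq> {}" using d0 by blast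
    fix x assume "x \<in> {(\<Sum>m<r. vnorm2 n1 (a1 m) * vnorm2 n2 (a2 m) * vnorm2 n3 (a3 m) * vnorm2 n4 (a4 m)) |
        r a1 a2 a3 a4. is_rank1_decomp n1 n2 n3 n4 X r a1 a2 a3 a4}"
    then obtain r a1 a2 a3 a4 where "is_rank1_decomp n1 n2 n3 n4 X r a1 a2 a3 a4"
      "x = cost n1 n2 n3 n4 r a1 a2 a3 a4" unfolding cost_def by blast
    then show "cf Fs \<le> x" using lower by simp
  qed
  moreover have "nuclear_norm n1 n2 n3 n4 X \<le> cf Fs" unfolding cf_def by (rule nn_le[OF decs])
  ultimately have "cf Fs = nuclear_norm n1 n2 n3 n4 X" by simp
  then show ?thesis using decs unfolding cf_def by blast
qed



lemma obj_split:
  assumes J: "J \<ge> 1" and L: "L \<ge> 1"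
  defines "s \<equiv> sqrt (real J * real L)"
  shows "fact_objective N1 J N3 L D U V R T =
     (\<Sum>d<D. vnorm2 N1 (\<lambda>i. U i d) * vnorm2 J (\<lambda>j. R j d) * vnorm2 N3 (\<lambda>k. V k d) * vnorm2 L (\<lambda>l. T l d))
   + (\<Sum>d<D. ((vnorm2 N1 (\<lambda>i. U i d) * (vnorm2 J (\<lambda>j. R j d) * vnorm2 L (\<lambda>l. T l d)) - s * vnorm2 N3 (\<lambda>k. V k d))^2
            + (vnorm2 N3 (\<lambda>k. V k d) * (vnorm2 J (\<lambda>j. R j d) * vnorm2 L (\<lambda>l. T l d)) - s * vnorm2 N1 (\<lambda>i. U i d))^2) / (4 * s))"
proof -
  have s: "s > 0" using J L by (simp add: s_def)
  show ?thesis
    unfolding obj_formula2[OF J L] s_def[symmetric] amgm[OF s] sum.distrib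
    by (simp add: mult_ac)
qed

theorem theorem2:
  fixes N1 J N3 L :: nat
    and X :: "nat \<Rightarrow> nat \<Rightarrow> nat \<Rightarrow> nat \<Rightarrow> real"
  assumes "N1 \<ge> 1" "J \<ge> 1" "N3 \<ge> 1" "L \<ge> 1"
  shows "(\<exists>D U V R T. is_factorization N1 J N3 L X D U V R T \<and>
            fact_objective N1 J N3 L D U V R T = nuclear_norm N1 J N3 L X)
       \<and> (\<forall>D U V R T. is_factorization N1 J N3 L X D U V R T \<longrightarrow>
            nuclear_norm N1 J N3 L X \<le> fact_objective N1 J N3 L D U V R T)
       \<and> (\<forall>D U V R T. is_factorization N1 J N3 L X D U V R T \<and>
            fact_objective N1 J N3 L D U V R T = nuclear_norm N1 J N3 L X \<longrightarrow>
            (\<forall>d<D.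
               vnorm2 N1 (\<lambda>i. U i d) * vnorm2 J (\<lambda>j. R j d) * vnorm2 L (\<lambda>l. T l d)
                 = sqrt (real J * real L) * vnorm2 N3 (\<lambda>k. V k d)
             \<and> vnorm2 N3 (\<lambda>k. V k d) * vnorm2 J (\<lambda>j. R j d) * vnorm2 L (\<lambda>l. T l d)
                 = sqrt (real J * real L) * vnorm2 N1 (\<lambda>i. U i d)))"
proof (intro conjI allI impI)
  have J: "J \<ge> 1" and L: "L \<ge> 1" using assms by auto
  define s where "s = sqrt (real J * real L)"
  have s: "s > 0" using J L by (simp add: s_def)
  show "\<exists>D U V R T. is_factorization N1 J N3 L X D U V R T \<and>
            fact_objective N1 J N3 L D U V R T = nuclear_norm N1 J N3 L X"
  proof -
    obtain r a1 a2 a3 a4 where d: "is_rank1_decomp N1 J N3 L X r a1 a2 a3 a4"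
      and c: "cost N1 J N3 L r a1 a2 a3 a4 = nuclear_norm N1 J N3 L X"
      using attain by blast
    show ?thesis using construct[OF d J L] c by metis
  qed
  define sl where "sl U V R T d = ((vnorm2 N1 (\<lambda>i. U i d) * (vnorm2 J (\<lambda>j. R j d) * vnorm2 L (\<lambda>l. T l d)) - s * vnorm2 N3 (\<lambda>k. V k d))^2
            + (vnorm2 N3 (\<lambda>k. V k d) * (vnorm2 J (\<lambda>j. R j d) * vnorm2 L (\<lambda>l. T l d)) - s * vnorm2 N1 (\<lambda>i. U i d))^2) / (4 * s)" 
     for U V R T :: "nat \<Rightarrow> nat \<Rightarrow> real" and d
  have slnn: "sl U V R T d \<ge> 0" for U V R T d unfolding sl_def using s by simp
  have P: "nuclear_norm N1 J N3 L X \<le> fact_objective N1 J N3 L D U V R T \<and>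
      nuclear_norm N1 J N3 L X \<le> (\<Sum>d<D. vnorm2 N1 (\<lambda>i. U i d) * vnorm2 J (\<lambda>j. R j d) * vnorm2 N3 (\<lambda>k. V k d) * vnorm2 L (\<lambda>l. T l d)) \<and>
      fact_objective N1 J N3 L D U V R T = (\<Sum>d<D. vnorm2 N1 (\<lambda>i. U i d) * vnorm2 J (\<lambda>j. R j d) * vnorm2 N3 (\<lambda>k. V k d) * vnorm2 L (\<lambda>l. T l d)) + (\<Sum>d<D. sl U V R T d)"
    if F: "is_factorization N1 J N3 L X D U V R T" for D U V R T
  proof -
    have nnle: "nuclear_norm N1 J N3 L X \<le> (\<Sum>d<D. vnorm2 N1 (\<lambda>i. U i d) * vnorm2 J (\<lambda>j. R j d) * vnorm2 N3 (\<lambda>k. V k d) * vnorm2 L (\<lambda>l. T l d))"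
      using nn_le[OF fact_decomp[OF F]] unfolding cost_def .
    have ob: "fact_objective N1 J N3 L D U V R T = (\<Sum>d<D. vnorm2 N1 (\<lambda>i. U i d) * vnorm2 J (\<lambda>j. R j d) * vnorm2 N3 (\<lambda>k. V k d) * vnorm2 L (\<lambda>l. T l d)) + (\<Sum>d<D. sl U V R T d)"
      unfolding obj_split[OF J L] sl_def s_def ..
    have "(\<Sum>d<D. sl U V R T d) \<ge> 0" by (intro sum_nonneg slnn)
    then show ?thesis using nnle ob by linarith
  qed
  show "nuclear_norm N1 J N3 L X \<le> fact_objective N1 J N3 L D U V R T"
    if "is_factorization N1 J N3 L X D U V R T" for D U V R T
    using P[OF that] by blast
  have Z: "(vnorm2 N1 (\<lambda>i. U i d) * (vnorm2 J (\<lambda>j. R j d) * vnorm2 L (\<lambda>l. T l d)) - s * vnorm2 N3 (\<lambda>k. V k d)) = 0 \<and>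
     (vnorm2 N3 (\<lambda>k. V k d) * (vnorm2 J (\<lambda>j. R j d) * vnorm2 L (\<lambda>l. T l d)) - s * vnorm2 N1 (\<lambda>i. U i d)) = 0"
    if H: "is_factorization N1 J N3 L X D U V R T \<and> fact_objective N1 J N3 L D U V R T = nuclear_norm N1 J N3 L X" and d: "d < D"
    for D U V R T d
  proof -
    have "(\<Sum>d<D. sl U V R T d) \<le> 0" using P[of D U V R T] H by linarith
    then have "(\<Sum>d<D. sl U V R T d) = 0" using sum_nonneg[of "{..<D}" "sl U V R T"] slnn by (meson order.antisym)
    then have "sl U V R T d = 0" using d slnn by (simp add: sum_nonneg_eq_0_iff)
    then show ?thesis unfolding sl_def using s by (simp add: add_nonneg_eq_0_iff)
  qed
  show "vnorm2 N1 (\<lambda>i. U i d) * vnorm2 J (\<lambda>j. R j d) * vnorm2 L (\<lambda>l. T l d) = sqrt (real J * real L) * vnorm2 N3 (\<lambda>k. V k d)"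
    if "is_factorization N1 J N3 L X D U V R T \<and> fact_objective N1 J N3 L D U V R T = nuclear_norm N1 J N3 L X" "d < D"
    for D U V R T d
    using Z[OF that] unfolding s_def by (simp add: mult.assoc)
  show "vnorm2 N3 (\<lambda>k. V k d) * vnorm2 J (\<lambda>j. R j d) * vnorm2 L (\<lambda>l. T l d) = sqrt (real J * real L) * vnorm2 N1 (\<lambda>i. U i d)"
    if "is_factorization N1 J N3 L X D U V R T \<and> fact_objective N1 J N3 L D U V R T = nuclear_norm N1 J N3 L X" "d < D"
    for D U V R T d
    using Z[OF that] unfolding s_def by (simp add: mult.assoc)
qed

end
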